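(* Let $C$ be a $k$-context of the call-by-value $\lambda$-calculus and $V_1,\dots,V_k$ values. Then $$\mathcal{T}(C[V_1,\dots,V_k])=\big\{\tilde c[\vec v^{\,1},\dots,\vec v^{\,k}]\ \big|\ c\in\mathcal{T}(C),\ \tilde c\text{ a rigid of }c,\ \vec v^{\,i}=\langle v^i_1,\dots,v^i_{\deg_{\Box_i}(c)}\rangle \text{ with } [v^i_1,\dots,v^i_{\deg_{\Box_i}(c)}]\in\mathcal{T}(V_i)\text{ for all } i\big\}.$$
   Context: CbV $\lambda$-terms are ordinary $\lambda$-terms $M::=x\mid \lambda x.M\mid MM$; values are variables and abstractions. A $k$-context $C$ is a $\lambda$-term possibly containing holes $\Box_1,\dots,\Box_k$ (each any number of times); $C[M_1,\dots,M_k]$ denotes filling $\Box_i$ with $M_i$ (variable capture allowed). Resource CbV terms: resource values $v::=x\mid \lambda x.s$ and resource simple terms $s::= s_1s_2\mid [v_1,\dots,v_n]$ ($n\ge 0$, brackets denote finite multisets, "bags"), up to $\alpha$-equivalence. Resource $k$-contexts: $c^v::=\Box_1\mid\dots\mid\Box_k\mid x\mid \lambda x.c^s$, $c^s::=c^s_1c^s_2\mid[c^v_1,\dots,c^v_n]$. $\deg_{\Box_i}(c)$ is the number of occurrences of $\Box_i$ in $c$. Taylor expansion: $\mathcal{T}(x)=\{[x,\dots,x]\ (n \text{ copies})\mid n\in\mathbb N\}$, $\mathcal{T}(\Box_i)=\{[\Box_i,\dots,\Box_i]\ (n\text{ copies})\mid n\in\mathbb N\}$, $\mathcal{T}(\lambda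 x.M)=\{[\lambda x.s_1,\dots,\lambda x.s_n]\mid n\in\mathbb N,\ s_j\in\mathcal{T}(M)\}$, $\mathcal{T}(M_1M_2)=\{s_1s_2\mid s_j\in\mathcal{T}(M_j)\}$. Rigids of a resource context $c$ (ordered-list versions): $\mathrm{Rigid}(\Box_i)=\{\Box_i\}$, $\mathrm{Rigid}(x)=\{x\}$, $\mathrm{Rigid}(\lambda x.c_0)=\{\lambda x.\tilde c_0\mid\tilde c_0\in\mathrm{Rigid}(c_0)\}$, $\mathrm{Rigid}(c_0c_1)=\{\tilde c_0\tilde c_1\mid \tilde c_j\in\mathrm{Rigid}(c_j)\}$, $\mathrm{Rigid}([c_1,\dots,c_n])=\{\langle\tilde c_{\sigma(1)},\dots,\tilde c_{\sigma(n)}\rangle\mid\sigma\text{ a permutation},\ \tilde c_j\in\mathrm{Rigid}(c_j)\}$. Filling a rigid $\tilde c$ of $c$ with lists $\vec v^{\,i}$ of resource values of length $\deg_{\Box_i}(c)$: for $\tilde c=\Box_i$, the result is the unique value in $\vec v^{\,i}$; for $x$ it is $x$; $(\lambda x.\tilde c_0)[\vec v^{\,1},\dots,\vec v^{\,k}]=\lambda x.\tilde c_0[\vec v^{\,1},\dots,\vec v^{\,k}]$; for $\tilde c_1\tilde c_2$, split each $\vec v^{\,i}=\vec w^{\,i1}\vec w^{\,i2}$ with $\vec w^{\,ij}$ of length $\deg_{\Box_i}(c_j)$, result $\tilde c_1[\vec w^{\,11},\dots,\vec w^{\,k1}]\,\tilde c_2[\vec w^{\,12},\dots,\vec w^{\,k2}]$;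 for $\langle\tilde c_{\sigma(1)},\dots,\tilde c_{\sigma(n)}\rangle$, split $\vec v^{\,i}=\vec w^{\,i1}\cdots\vec w^{\,in}$ with $\vec w^{\,ij}$ of length $\deg_{\Box_i}(c_{\sigma(j)})$, result the bag $[\tilde c_{\sigma(1)}[\vec w^{\,11},\dots,\vec w^{\,k1}],\dots,\tilde c_{\sigma(n)}[\vec w^{\,1n},\dots,\vec w^{\,kn}]]$. *)

theory Defs
  imports Main "HOL-Library.Multiset"
begin

type_synonym var = nat

datatype lterm = Var var | Lam var lterm | App lterm lterm | Hole nat

fun holes :: "lterm \<Rightarrow> nat set" where
  "holes (Var x) = {}"
| "holes (Lam x M) = holes M"
| "holes (App M N) = holes M \<union> holes N"
| "holes (Hole i) = {i}"

fun is_value :: "lterm \<Rightarrow> bool" where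
  "is_value (Var x) = True"
| "is_value (Lam x M) = True"
| "is_value _ = False"

text \<open>Context filling C[M_1,...,M_k]: hole i replaced by M i, variable capture allowed.\<close>
fun fill_ctx :: "lterm \<Rightarrow> (nat \<Rightarrow> lterm) \<Rightarrow> lterm" where
  "fill_ctx (Var x) Ms = Var x"
| "fill_ctx (Lam x M) Ms = Lam x (fill_ctx M Ms)"
| "fill_ctx (App M N) Ms = App (fill_ctx M Ms) (fill_ctx N Ms)"
| "fill_ctx (Hole i) Ms = Ms i"

datatype rval = RVar var | RLam var rsimp | RHole nat
     and rsimp = RApp rsimp rsimp | RBag "rval multiset"

primrec degV :: "nat \<Rightarrow> rval \<Rightarrow> nat" and degS :: "nat \<Rightarrow> rsimp \<Rightarrow> nat" where
  "degV i (RVar x) = 0"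
| "degV i (RLam x s) = degS i s"
| "degV i (RHole j) = (if i = j then 1 else 0)"
| "degS i (RApp s t) = degS i s + degS i t"
| "degS i (RBag M) = sum_mset (image_mset (degV i) M)"

fun taylor :: "lterm \<Rightarrow> rsimp set" where
  "taylor (Var x) = {RBag (replicate_mset n (RVar x)) | n. True}"
| "taylor (Hole i) = {RBag (replicate_mset n (RHole i)) | n. True}"
| "taylor (Lam x M) = {RBag (mset (map (RLam x) ss)) | ss. set ss \<subseteq> taylor M}"
| "taylor (App M N) = {RApp s t | s t. s \<in> taylor M \<and> t \<in> taylor N}"

section \<open>Rigids (bags replaced by ordered lists)\<close>

datatype rigv = GVar var | GLam var rigs | GHole nat
     and rigs = GApp rigs rigs | GList "rigv list"

inductive rigidV :: "rval \<Rightarrow> rigv \<Rightarrow> bool" and rigidS :: "rsimp \<Rightarrow> rigs \<Rightarrow> bool" where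
  "rigidV (RVar x) (GVar x)"
| "rigidV (RHole i) (GHole i)"
| "rigidS s g \<Longrightarrow> rigidV (RLam x s) (GLam x g)"
| "rigidS s1 g1 \<Longrightarrow> rigidS s2 g2 \<Longrightarrow> rigidS (RApp s1 s2) (GApp g1 g2)"
| "mset cs = M \<Longrightarrow> list_all2 rigidV cs gs \<Longrightarrow> rigidS (RBag M) (GList gs)"

fun gdegV :: "nat \<Rightarrow> rigv \<Rightarrow> nat" and gdegS :: "nat \<Rightarrow> rigs \<Rightarrow> nat"
  and gdegL :: "nat \<Rightarrow> rigv list \<Rightarrow> nat" where
  "gdegV i (GVar x) = 0"
| "gdegV i (GLam x g) = gdegS i g"
| "gdegV i (GHole j) = (if i = j then 1 else 0)"
| "gdegS i (GApp g h) = gdegS i g + gdegS i h"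
| "gdegS i (GList gs) = gdegL i gs"
| "gdegL i [] = 0"
| "gdegL i (g # gs) = gdegV i g + gdegL i gs"

text \<open>Filling a rigid with lists of resource values: list vs i is split consecutively
  among the sub-rigids according to their degrees in hole i.\<close>
fun fillV :: "rigv \<Rightarrow> (nat \<Rightarrow> rval list) \<Rightarrow> rval"
  and fillS :: "rigs \<Rightarrow> (nat \<Rightarrow> rval list) \<Rightarrow> rsimp"
  and fillL :: "rigv list \<Rightarrow> (nat \<Rightarrow> rval list) \<Rightarrow> rval list" where
  "fillV (GVar x) vs = RVar x"
| "fillV (GLam x g) vs = RLam x (fillS g vs)"
| "fillV (GHole i) vs = hd (vs i)"
| "fillS (GApp g h) vs =
     RApp (fillS g (\<lambda>i. take (gdegS i g) (vs i))) (fillS h (\<lambda>i. drop (gdegS i g) (vs i)))"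
| "fillS (GList gs) vs = RBag (mset (fillL gs vs))"
| "fillL [] vs = []"
| "fillL (g # gs) vs =
     fillV g (\<lambda>i. take (gdegV i g) (vs i)) # fillL gs (\<lambda>i. drop (gdegV i g) (vs i))"

end

theory Submission imports Defs
begin

lemma gdegL_sum: "list_all2 (\<lambda>c g. rigidV c g \<and> gdegV i g = degV i c) cs gs \<Longrightarrow> gdegL i gs = sum_list (map (degV i) cs)"
  by (induction rule: list_all2_induct) auto

lemma gdeg_rigid:
  "(rigidV c g \<longrightarrow> gdegV i g = degV i c) \<and> (rigidS s h \<longrightarrow> gdegS i h = degS i s)"
proof (induction rule: rigidV_rigidS.induct)
  case (5 cs M gs)
  then show ?case using gdegL_sum[of i cs gs] by (auto simp flip: sum_mset_sum_list mset_map)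
qed auto

lemma gdegS_rigid: "rigidS s h \<Longrightarrow> gdegS i h = degS i s" using gdeg_rigid by blast
lemma gdegV_rigid: "rigidV s h \<Longrightarrow> gdegV i h = degV i s" using gdeg_rigid by blast

fun tv :: "lterm \<Rightarrow> rval set" where
  "tv (Var x) = {RVar x}"
| "tv (Lam x M) = RLam x ` taylor M"
| "tv _ = {}"

lemma ex_map_set: "set l \<subseteq> f ` T \<Longrightarrow> \<exists>ss. l = map f ss \<and> set ss \<subseteq> T"
proof (induction l)
  case (Cons a l)
  then obtain ss where "l = map f ss" "set ss \<subseteq> T" by auto
  moreover obtain s where "s \<in> T" "a = f s" using Cons.prems by auto
  ultimately show ?case by (intro exI[of _ "s # ss"]) auto
qed auto

lemma repl_mset_eq: "(mset l = replicate_mset n a) = (l = replicate n a)"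
  by (metis mset_replicate mset_eq_setD replicate_eqI set_replicate_conv_if length_replicate size_mset size_replicate_mset empty_iff insert_iff subsetI)

lemma set_sub_single: "set l \<subseteq> {a} \<Longrightarrow> l = replicate (length l) a"
  by (induction l) auto

lemma taylor_val_char:
  assumes "is_value V"
  shows "taylor V = {RBag (mset l) | l. set l \<subseteq> tv V}"
  using assms
proof (cases V)
  case (Var x)
  show ?thesis
  proof (rule set_eqI, rule iffI)
    fix t assume "t \<in> taylor V"
    then obtain n where "t = RBag (replicate_mset n (RVar x))" using Var by auto
    then show "t \<in> {RBag (mset l) | l. set l \<subseteq> tv V}" using Var
      by (intro CollectI exI[of _ "replicate n (RVar x)"]) auto
  next
    fix t assume "t \<in> {RBag (mset l) | l. set l \<subseteq> tv V}"
    then obtain l where l: "t = RBag (mset l)" "set l \<subseteq> {RVar x}" using Var by auto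
    then have "mset l = replicate_mset (length l) (RVar x)"
      by (metis set_sub_single mset_replicate)
    then show "t \<in> taylor V" using Var l by auto
  qed
next
  case (Lam x M)
  show ?thesis
  proof (rule set_eqI, rule iffI)
    fix t assume "t \<in> taylor V"
    then obtain ss where "t = RBag (mset (map (RLam x) ss))" "set ss \<subseteq> taylor M" using Lam by auto
    then show "t \<in> {RBag (mset l) | l. set l \<subseteq> tv V}" using Lam
      by (intro CollectI exI[of _ "map (RLam x) ss"]) auto
  next
    fix t assume "t \<in> {RBag (mset l) | l. set l \<subseteq> tv V}"
    then obtain l where l: "t = RBag (mset l)" "set l \<subseteq> RLam x ` taylor M" using Lam by auto
    then obtain ss where "l = map (RLam x) ss" "set ss \<subseteq> taylor M" using ex_map_set by blast
    then show "t \<in> taylor V" using Lam l by auto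
  qed
qed auto


lemma fillL_var: "list_all2 rigidV cs gs \<Longrightarrow> set cs \<subseteq> {RVar x} \<Longrightarrow> fillL gs vs = cs"
proof (induction arbitrary: vs rule: list_all2_induct)
  case (Cons c cs g gs)
  then show ?case by (auto elim: rigidV.cases)
qed auto

lemma fillL_hole: "list_all2 rigidV cs gs \<Longrightarrow> set cs \<subseteq> {RHole j} \<Longrightarrow> length cs \<le> length (vs j)
  \<Longrightarrow> fillL gs vs = take (length cs) (vs j)"
proof (induction arbitrary: vs rule: list_all2_induct)
  case (Cons c cs g gs)
  then have c: "c = RHole j" and g: "g = GHole j" by (auto elim: rigidV.cases)
  have IH: "fillL gs (\<lambda>i. drop (gdegV i g) (vs i)) = take (length cs) (drop 1 (vs j))"
    using Cons by (simp add: g)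
  show ?case using Cons.prems IH by (cases "vs j") (auto simp: g)
qed auto

lemma sum_mset_map: "sum_mset (image_mset f (mset l)) = sum_list (map f l)"
  by (simp flip: sum_mset_sum_list mset_map)

lemma fill_in_taylor:
  "holes C \<subseteq> {1..k} \<Longrightarrow> \<forall>i\<in>{1..k}. is_value (V i) \<Longrightarrow> c \<in> taylor C \<Longrightarrow> rigidS c g \<Longrightarrow>
   \<forall>i\<in>{1..k}. length (vs i) = degS i c \<and> set (vs i) \<subseteq> tv (V i) \<Longrightarrow>
   fillS g vs \<in> taylor (fill_ctx C V)"
proof (induction C arbitrary: c g vs)
  case (Var x)
  then obtain n where c: "c = RBag (replicate_mset n (RVar x))" by auto
  from Var.prems(4) c obtain cs gs where cs: "mset cs = replicate_mset n (RVar x)" "list_all2 rigidV cs gs"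
    "g = GList gs" by (auto elim: rigidS.cases)
  have "set cs \<subseteq> {RVar x}" proof -
    have "set cs = set (replicate n (RVar x))" using cs(1) by (metis mset_replicate mset_eq_setD)
    then show ?thesis by (auto split: if_splits)
  qed
  then have "fillL gs vs = cs" using fillL_var cs(2) by blast
  then show ?case using cs c Var by auto
next
  case (Hole j)
  then have j: "j \<in> {1..k}" by auto
  from Hole obtain n where c: "c = RBag (replicate_mset n (RHole j))" by auto
  from Hole.prems(4) c obtain cs gs where cs: "mset cs = replicate_mset n (RHole j)" "list_all2 rigidV cs gs"
    "g = GList gs" by (auto elim: rigidS.cases)
  have sc: "set cs \<subseteq> {RHole j}" proof -
    have "set cs = set (replicate n (RHole j))" using cs(1) by (metis mset_replicate mset_eq_setD)
    then show ?thesis by (auto split: if_splits)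
  qed
  have lc: "length cs = n" using cs(1) by (metis size_mset size_replicate_mset)
  have dj: "degS j c = n" using c by simp
  have lv: "length (vs j) = n" using Hole.prems(5) j dj by auto
  have "fillL gs vs = vs j" using fillL_hole[OF cs(2) sc] lc lv by simp
  then have "fillS g vs = RBag (mset (vs j))" using cs by simp
  moreover have "set (vs j) \<subseteq> tv (V j)" using Hole.prems(5) j by auto
  ultimately show ?case using taylor_val_char[of "V j"] Hole.prems(2) j by auto
next
  case (App M N)
  from App.prems(3) obtain c1 c2 where c: "c = RApp c1 c2" "c1 \<in> taylor M" "c2 \<in> taylor N" by auto
  from App.prems(4) c obtain g1 g2 where g: "g = GApp g1 g2" "rigidS c1 g1" "rigidS c2 g2"
    by (auto elim: rigidS.cases)
  have d1: "gdegS i g1 = degS i c1" for i using g gdegS_rigid by blast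
  have L: "length (vs i) = degS i c1 + degS i c2 \<and> set (vs i) \<subseteq> tv (V i)" if "i \<in> {1..k}" for i
    using App.prems(5) that c by simp
  have "fillS g1 (\<lambda>i. take (gdegS i g1) (vs i)) \<in> taylor (fill_ctx M V)"
  proof (rule App.IH(1))
    show "\<forall>i\<in>{1..k}. length (take (gdegS i g1) (vs i)) = degS i c1 \<and> set (take (gdegS i g1) (vs i)) \<subseteq> tv (V i)"
      using L d1 set_take_subset by (metis le_add1 length_take min.absorb2 subset_trans)
  qed (use App.prems c g in auto)
  moreover have "fillS g2 (\<lambda>i. drop (gdegS i g1) (vs i)) \<in> taylor (fill_ctx N V)"
  proof (rule App.IH(2))
    show "\<forall>i\<in>{1..k}. length (drop (gdegS i g1) (vs i)) = degS i c2 \<and> set (drop (gdegS i g1) (vs i)) \<subseteq> tv (V i)"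
      using L d1 set_drop_subset by (metis add_diff_cancel_left' length_drop subset_trans)
  qed (use App.prems c g in auto)
  ultimately show ?case using g by auto
next
  case (Lam x M)
  from Lam.prems(3) obtain ss where c: "c = RBag (mset (map (RLam x) ss))" "set ss \<subseteq> taylor M" by auto
  from Lam.prems(4) c obtain cs gs where cs: "mset cs = mset (map (RLam x) ss)" "list_all2 rigidV cs gs"
    "g = GList gs" by (auto elim: rigidS.cases)
  have sc: "set cs \<subseteq> RLam x ` taylor M" using cs(1) c(2) by (metis mset_eq_setD set_map image_mono)
  have dc: "degS i c = sum_list (map (degV i) cs)" for i using c cs(1)
    by (metis degS.simps(2) sum_mset_map)
  have key: "list_all2 rigidV cs gs \<Longrightarrow> set cs \<subseteq> RLam x ` taylor M \<Longrightarrow>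
     \<forall>i\<in>{1..k}. length (vs i) = sum_list (map (degV i) cs) \<and> set (vs i) \<subseteq> tv (V i) \<Longrightarrow>
     \<exists>ts. fillL gs vs = map (RLam x) ts \<and> set ts \<subseteq> taylor (fill_ctx M V)" for cs gs vs
  proof (induction arbitrary: vs rule: list_all2_induct)
    case (Cons c0 cs g0 gs)
    then obtain s where s: "c0 = RLam x s" "s \<in> taylor M" by auto
    with Cons.hyps(1) obtain h where h: "g0 = GLam x h" "rigidS s h" by (auto elim: rigidV.cases)
    have dh: "gdegV i g0 = degS i s" for i using h gdegS_rigid by simp
    have L: "length (vs i) = degS i s + sum_list (map (degV i) cs) \<and> set (vs i) \<subseteq> tv (V i)" if "i \<in> {1..k}" for i
      using Cons.prems(2) that s by simp
    have "fillS h (\<lambda>i. take (degS i s) (vs i)) \<in> taylor (fill_ctx M V)"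
    proof (rule Lam.IH)
      show "\<forall>i\<in>{1..k}. length (take (degS i s) (vs i)) = degS i s \<and> set (take (degS i s) (vs i)) \<subseteq> tv (V i)"
        using L set_take_subset by (metis le_add1 length_take min.absorb2 subset_trans)
    qed (use Lam.prems s h in auto)
    moreover have "\<exists>ts. fillL gs (\<lambda>i. drop (gdegV i g0) (vs i)) = map (RLam x) ts \<and>
      set ts \<subseteq> taylor (fill_ctx M V)"
    proof (rule Cons.IH)
      show "set cs \<subseteq> RLam x ` taylor M" using Cons.prems(1) by simp
      show "\<forall>i\<in>{1..k}. length (drop (gdegV i g0) (vs i)) = sum_list (map (degV i) cs) \<and> set (drop (gdegV i g0) (vs i)) \<subseteq> tv (V i)"
        using L dh set_drop_subset by (metis add_diff_cancel_left' length_drop subset_trans)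
    qed
    then obtain ts where "fillL gs (\<lambda>i. drop (gdegV i g0) (vs i)) = map (RLam x) ts"
      "set ts \<subseteq> taylor (fill_ctx M V)" by blast
    ultimately show ?case using h dh
      by (intro exI[of _ "fillS h (\<lambda>i. take (degS i s) (vs i)) # ts"]) auto
  qed auto
  have "\<exists>ts. fillL gs vs = map (RLam x) ts \<and> set ts \<subseteq> taylor (fill_ctx M V)"
    by (rule key[OF cs(2) sc]) (use Lam.prems(5) dc in simp)
  then obtain ts where "fillL gs vs = map (RLam x) ts" "set ts \<subseteq> taylor (fill_ctx M V)" by blast
  then show ?case using cs(3) by auto
qed


lemma fillL_repl_var: "fillL (replicate n (GVar x)) vs = replicate n (RVar x)"
  by (induction n arbitrary: vs) auto

lemma rigid_repl_var: "list_all2 rigidV (replicate n (RVar x)) (replicate n (GVar x))"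
  by (induction n) (auto intro: rigidV_rigidS.intros)

lemma rigid_repl_hole: "list_all2 rigidV (replicate n (RHole x)) (replicate n (GHole x))"
  by (induction n) (auto intro: rigidV_rigidS.intros)

lemma taylor_decomp:
  "holes C \<subseteq> {1..k} \<Longrightarrow> \<forall>i\<in>{1..k}. is_value (V i) \<Longrightarrow> t \<in> taylor (fill_ctx C V) \<Longrightarrow>
   \<exists>c g vs. c \<in> taylor C \<and> rigidS c g \<and> (\<forall>i. length (vs i) = degS i c) \<and>
     (\<forall>i\<in>{1..k}. set (vs i) \<subseteq> tv (V i)) \<and> t = fillS g vs"
proof (induction C arbitrary: t)
  case (Var x)
  then obtain n where t: "t = RBag (replicate_mset n (RVar x))" by auto
  let ?c = "RBag (replicate_mset n (RVar x))"
  have "rigidS ?c (GList (replicate n (GVar x)))"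
    by (rule rigidV_rigidS.intros(5)[OF _ rigid_repl_var]) simp
  moreover have "degS i ?c = 0" for i by simp
  moreover have "t = fillS (GList (replicate n (GVar x))) (\<lambda>_. [])"
    using t fillL_repl_var by simp
  ultimately show ?case by (intro exI[of _ ?c] exI[of _ "GList (replicate n (GVar x))"] exI[of _ "\<lambda>_. []"]) auto
next
  case (Hole j)
  then have j: "j \<in> {1..k}" by auto
  with Hole have "t \<in> taylor (V j)" by simp
  then obtain l where l: "t = RBag (mset l)" "set l \<subseteq> tv (V j)"
    using taylor_val_char[of "V j"] Hole.prems(2) j by auto
  define n where "n = length l"
  let ?c = "RBag (replicate_mset n (RHole j))"
  let ?g = "GList (replicate n (GHole j))"
  let ?vs = "(\<lambda>_. [])(j := l)"
  have r: "rigidS ?c ?g"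
    by (rule rigidV_rigidS.intros(5)[OF _ rigid_repl_hole]) simp
  have lens: "\<forall>i. length (?vs i) = degS i ?c" using n_def by auto
  have sets: "\<forall>i\<in>{1..k}. set (?vs i) \<subseteq> tv (V i)" using l(2) by auto
  have "fillL (replicate n (GHole j)) ?vs = take (length (replicate n (RHole j))) (?vs j)"
    by (rule fillL_hole[OF rigid_repl_hole]) (auto simp: n_def)
  then have eq: "fillL (replicate n (GHole j)) ?vs = l" by (simp add: n_def)
  have tf: "t = fillS ?g ?vs" by (simp only: fillS.simps eq l(1))
  have tc: "?c \<in> taylor (Hole j)" by auto
  show ?case using r lens sets tf tc by blast
next
  case (App M N)
  from App.prems(3) obtain t1 t2 where t: "t = RApp t1 t2" "t1 \<in> taylor (fill_ctx M V)"
    "t2 \<in> taylor (fill_ctx N V)" by auto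
  obtain c1 g1 vs1 where 1: "c1 \<in> taylor M" "rigidS c1 g1" "\<forall>i. length (vs1 i) = degS i c1"
    "\<forall>i\<in>{1..k}. set (vs1 i) \<subseteq> tv (V i)" "t1 = fillS g1 vs1"
    using App.IH(1)[OF _ App.prems(2) t(2)] App.prems(1) by auto
  obtain c2 g2 vs2 where 2: "c2 \<in> taylor N" "rigidS c2 g2" "\<forall>i. length (vs2 i) = degS i c2"
    "\<forall>i\<in>{1..k}. set (vs2 i) \<subseteq> tv (V i)" "t2 = fillS g2 vs2"
    using App.IH(2)[OF _ App.prems(2) t(3)] App.prems(1) by auto
  have d1: "gdegS i g1 = length (vs1 i)" for i using 1 gdegS_rigid by simp
  have e1: "(\<lambda>i. take (gdegS i g1) (vs1 i @ vs2 i)) = vs1" using d1 by auto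
  have e2: "(\<lambda>i. drop (gdegS i g1) (vs1 i @ vs2 i)) = vs2" using d1 by auto
  have "t = fillS (GApp g1 g2) (\<lambda>i. vs1 i @ vs2 i)" using t 1 2 e1 e2 by simp
  moreover have "rigidS (RApp c1 c2) (GApp g1 g2)" using 1 2 by (auto intro: rigidV_rigidS.intros)
  moreover have "RApp c1 c2 \<in> taylor (App M N)" using 1 2 by auto
  ultimately show ?case using 1 2
    by (intro exI[of _ "RApp c1 c2"] exI[of _ "GApp g1 g2"] exI[of _ "\<lambda>i. vs1 i @ vs2 i"]) auto
next
  case (Lam x M)
  from Lam.prems(3) obtain ss where t: "t = RBag (mset (map (RLam x) ss))"
    "set ss \<subseteq> taylor (fill_ctx M V)" by auto
  have key: "set ss \<subseteq> taylor (fill_ctx M V) \<Longrightarrow> \<exists>cs gs vs. set cs \<subseteq> taylor M \<and> list_all2 rigidS cs gs \<and>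
     (\<forall>i. length (vs i) = sum_list (map (degS i) cs)) \<and> (\<forall>i\<in>{1..k}. set (vs i) \<subseteq> tv (V i)) \<and>
     fillL (map (GLam x) gs) vs = map (RLam x) ss" for ss
  proof (induction ss)
    case Nil
    then show ?case by (intro exI[of _ "[]"] exI[of _ "[]"] exI[of _ "\<lambda>_. []"]) auto
  next
    case (Cons s ss)
    obtain c g w where 1: "c \<in> taylor M" "rigidS c g" "\<forall>i. length (w i) = degS i c"
      "\<forall>i\<in>{1..k}. set (w i) \<subseteq> tv (V i)" "s = fillS g w"
      using Lam.IH[OF _ Lam.prems(2), of s] Lam.prems(1) Cons.prems by auto
    obtain cs gs vs where 2: "set cs \<subseteq> taylor M" "list_all2 rigidS cs gs"
      "\<forall>i. length (vs i) = sum_list (map (degS i) cs)" "\<forall>i\<in>{1..k}. set (vs i) \<subseteq> tv (V i)"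
      "fillL (map (GLam x) gs) vs = map (RLam x) ss"
      using Cons by auto
    have d1: "gdegV i (GLam x g) = length (w i)" for i using 1 gdegS_rigid by simp
    have e1: "(\<lambda>i. take (gdegV i (GLam x g)) (w i @ vs i)) = w" using d1 by auto
    have e2: "(\<lambda>i. drop (gdegV i (GLam x g)) (w i @ vs i)) = vs" using d1 by auto
    have "fillL (map (GLam x) (g # gs)) (\<lambda>i. w i @ vs i) = map (RLam x) (s # ss)"
      using 1 2 e1 e2 by (simp del: gdegV.simps)
    then show ?case using 1 2
      by (intro exI[of _ "c # cs"] exI[of _ "g # gs"] exI[of _ "\<lambda>i. w i @ vs i"]) auto
  qed
  obtain cs gs vs where 2: "set cs \<subseteq> taylor M" "list_all2 rigidS cs gs"
      "\<forall>i. length (vs i) = sum_list (map (degS i) cs)" "\<forall>i\<in>{1..k}. set (vs i) \<subseteq> tv (V i)"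
      "fillL (map (GLam x) gs) vs = map (RLam x) ss"
    using key[OF t(2)] by blast
  let ?c = "RBag (mset (map (RLam x) cs))"
  let ?g = "GList (map (GLam x) gs)"
  have "list_all2 rigidV (map (RLam x) cs) (map (GLam x) gs)"
    using 2(2) by (auto simp: list_all2_map1 list_all2_map2 intro: rigidV_rigidS.intros elim: list_all2_mono)
  then have "rigidS ?c ?g" by (rule rigidV_rigidS.intros(5)[OF refl])
  moreover have "degS i ?c = sum_list (map (degS i) cs)" for i
    by (simp only: degS.simps sum_mset_map) (simp add: o_def)
  moreover have "?c \<in> taylor (Lam x M)" using 2(1) by auto
  moreover have "t = fillS ?g vs" using t 2(5) by simp
  ultimately show ?case using 2
    by (intro exI[of _ ?c] exI[of _ ?g] exI[of _ vs]) auto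
qed

theorem mainTheorem2:
  fixes k :: nat and C :: lterm and V :: "nat \<Rightarrow> lterm"
  assumes "holes C \<subseteq> {1..k}"
    and "\<forall>i\<in>{1..k}. is_value (V i) \<and> holes (V i) = {}"
  shows "taylor (fill_ctx C V) =
    {fillS g vs | c g vs. c \<in> taylor C \<and> rigidS c g \<and>
       (\<forall>i\<in>{1..k}. length (vs i) = degS i c \<and> RBag (mset (vs i)) \<in> taylor (V i))}"
proof -
  have val: "\<forall>i\<in>{1..k}. is_value (V i)" using assms(2) by auto
  have ch: "RBag (mset l) \<in> taylor (V i) \<longleftrightarrow> set l \<subseteq> tv (V i)" if "i \<in> {1..k}" for i l
  proof -
    have "RBag (mset l) \<in> taylor (V i) \<longleftrightarrow> (\<exists>l'. mset l = mset l' \<and> set l' \<subseteq> tv (V i))"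
      using taylor_val_char[of "V i"] val that by auto
    also have "\<dots> \<longleftrightarrow> set l \<subseteq> tv (V i)" by (metis mset_eq_setD)
    finally show ?thesis .
  qed
  show ?thesis
  proof (rule set_eqI, rule iffI)
    fix t assume "t \<in> taylor (fill_ctx C V)"
    then obtain c g vs where "c \<in> taylor C" "rigidS c g" "\<forall>i. length (vs i) = degS i c"
      "\<forall>i\<in>{1..k}. set (vs i) \<subseteq> tv (V i)" "t = fillS g vs"
      using taylor_decomp[OF assms(1) val] by blast
    then show "t \<in> {fillS g vs | c g vs. c \<in> taylor C \<and> rigidS c g \<and>
       (\<forall>i\<in>{1..k}. length (vs i) = degS i c \<and> RBag (mset (vs i)) \<in> taylor (V i))}"
      using ch by blast
  next
    fix t assume "t \<in> {fillS g vs | c g vs. c \<in> taylor C \<and> rigidS c g \<and>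
       (\<forall>i\<in>{1..k}. length (vs i) = degS i c \<and> RBag (mset (vs i)) \<in> taylor (V i))}"
    then obtain c g vs where "c \<in> taylor C" "rigidS c g"
      "\<forall>i\<in>{1..k}. length (vs i) = degS i c \<and> RBag (mset (vs i)) \<in> taylor (V i)" "t = fillS g vs"
      by blast
    then show "t \<in> taylor (fill_ctx C V)"
      using fill_in_taylor[OF assms(1) val] ch by auto
  qed
qed

end
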